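(* Let $X$ be a Banach space as described in the context. There exists a function $f\in X$ which is not a polynomial and for which there is a sequence $p_n\in\mathcal{P}_n[\mathbb{Z}]$ with $\lim_{n\to\infty}\|f-p_n\|=0$ if and only if $\liminf_{n\to\infty}\|z^n\|=0$.
   Context: $\mathbb{D}=\{z\in\mathbb{C}:|z|<1\}$. $X$ is a complex Banach space of functions analytic in $\mathbb{D}$ whose norm $\|\cdot\|$ satisfies: (i) $\|f(\cdot\, e^{it})\|=\|f(\cdot)\|$ for all $t\in\mathbb{R}$ and $f\in X$; (ii) $\|f\|<\infty$ for every entire function $f$; (iii) for all $f\in X$ and $g\in L[0,2\pi]$, $\big\|\frac{1}{2\pi}\int_0^{2\pi} f(ze^{it})g(t)\,dt\big\|\le \frac{1}{2\pi}\int_0^{2\pi}|g(t)|\,dt\cdot\|f\|$. $\|z^n\|$ is the norm in $X$ of $z\mapsto z^n$. A complex number is called an integer if its real and imaginary parts are integers; $\mathcal{P}_n[\mathbb{Z}]$ is the set of complex polynomials of degree at most $n-1$ with integer coefficients in this sense. *)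

theory Defs
  imports "HOL-Analysis.Analysis" "HOL-Computational_Algebra.Polynomial"
begin

text \<open>Functions on the unit disc are represented as functions on the whole plane
  that vanish outside the open unit disc (so equality of functions is equality on D).\<close>

definition restrD :: "(complex \<Rightarrow> complex) \<Rightarrow> complex \<Rightarrow> complex" where
  "restrD f = (\<lambda>z. if z \<in> ball 0 1 then f z else 0)"

definition cinteger :: "complex \<Rightarrow> bool" where
  "cinteger c \<longleftrightarrow> Re c \<in> \<int> \<and> Im c \<in> \<int>"

text \<open>P_n[Z]: polynomials of degree at most n-1 with complex-integer coefficients
  (for n = 0 this is just the zero polynomial).\<close>
definition Pn_Z :: "nat \<Rightarrow> complex poly set" where
  "Pn_Z n = {p. (\<forall>i. cinteger (coeff p i)) \<and> (p = 0 \<or> degree p < n)}"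

definition admissible_space :: "(complex \<Rightarrow> complex) set \<Rightarrow> ((complex \<Rightarrow> complex) \<Rightarrow> real) \<Rightarrow> bool" where
  "admissible_space X N \<longleftrightarrow>
     \<comment> \<open>functions analytic in D (vanishing outside D)\<close>
     (\<forall>f\<in>X. f holomorphic_on ball 0 1 \<and> (\<forall>z. z \<notin> ball 0 1 \<longrightarrow> f z = 0)) \<and>
     \<comment> \<open>complex vector space\<close>
     ((\<lambda>z. 0) \<in> X) \<and> (\<forall>f\<in>X. \<forall>g\<in>X. (\<lambda>z. f z + g z) \<in> X) \<and> (\<forall>f\<in>X. \<forall>c::complex. (\<lambda>z. c * f z) \<in> X) \<and>
     \<comment> \<open>norm\<close>
     (\<forall>f\<in>X. N f \<ge> 0) \<and> (\<forall>f\<in>X. N f = 0 \<longleftrightarrow> f = (\<lambda>z. 0)) \<and>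
     (\<forall>f\<in>X. \<forall>c::complex. N (\<lambda>z. c * f z) = norm c * N f) \<and>
     (\<forall>f\<in>X. \<forall>g\<in>X. N (\<lambda>z. f z + g z) \<le> N f + N g) \<and>
     \<comment> \<open>completeness\<close>
     (\<forall>F. (\<forall>n. F n \<in> X) \<longrightarrow> (\<forall>e>0. \<exists>M. \<forall>m\<ge>M. \<forall>n\<ge>M. N (\<lambda>z. F m z - F n z) < e) \<longrightarrow>
          (\<exists>f\<in>X. (\<lambda>n. N (\<lambda>z. F n z - f z)) \<longlonglongrightarrow> 0)) \<and>
     \<comment> \<open>(i) rotation invariance\<close>
     (\<forall>f\<in>X. \<forall>t::real. (\<lambda>z. f (z * exp (\<i> * t))) \<in> X \<and> N (\<lambda>z. f (z * exp (\<i> * t))) = N f) \<and>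
     \<comment> \<open>(ii) every entire function belongs to X\<close>
     (\<forall>f. f holomorphic_on UNIV \<longrightarrow> restrD f \<in> X) \<and>
     \<comment> \<open>(iii) convolution with L^1 functions\<close>
     (\<forall>f\<in>X. \<forall>g::real \<Rightarrow> complex. g absolutely_integrable_on {0..2*pi} \<longrightarrow>
        (let h = (\<lambda>z. (1 / (2*pi)) * integral {0..2*pi} (\<lambda>t. f (z * exp (\<i> * t)) * g t)) in
          h \<in> X \<and> N h \<le> (1 / (2*pi)) * integral {0..2*pi} (\<lambda>t. norm (g t)) * N f))"

end

theory Submission
  imports Defs "HOL-Complex_Analysis.Complex_Analysis"
begin

lemma orth_integral:
  fixes m :: int
  shows "integral {0..2*pi} (\<lambda>t. exp (\<i> * complex_of_real t * of_int m)) = (if m = 0 then 2*pi else 0)"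
proof (cases "m = 0")
  case True then show ?thesis by (simp add: scaleR_conv_of_real)
next
  case False
  define a where "a = \<i> * of_int m"
  have a0: "a \<noteq> 0" using False by (simp add: a_def)
  have "\<And>t. t \<in> {0..2*pi} \<Longrightarrow> ((\<lambda>x. exp (a * x) / a) has_vector_derivative exp (a * t)) (at t within {0..2*pi})"
    using a0
    by (intro derivative_eq_intros has_complex_derivative_imp_has_vector_derivative [unfolded o_def] | simp)+
  then have "((\<lambda>t. exp(a * of_real t)) has_integral exp(a * complex_of_real (2*pi))/a - exp(a * of_real 0)/a)  {0..2*pi}"
    by (intro fundamental_theorem_of_calculus) auto
  moreover have "exp(a * complex_of_real (2*pi)) = 1"
  proof -
    have "a * complex_of_real (2*pi) = (2 * of_int m * pi) * \<i>" by (simp add: a_def algebra_simps)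
    then show ?thesis by (simp only:) (rule exp_integer_2pi, simp)
  qed
  ultimately have "((\<lambda>t. exp(a * of_real t)) has_integral 0) {0..2*pi}" by simp
  then show ?thesis using False by (simp add: a_def integral_unique mult.commute mult.left_commute)
qed

definition cf :: "nat \<Rightarrow> (complex \<Rightarrow> complex) \<Rightarrow> complex" where
  "cf k f = (deriv ^^ k) f 0 / fact k"

lemma cf_sums:
  assumes "f holomorphic_on ball 0 1" "norm z < 1"
  shows "(\<lambda>j. cf j f * z ^ j) sums f z"
  using holomorphic_power_series[OF assms(1), of z] assms(2) by (simp add: cf_def)

lemma cf_abs_summable:
  assumes "f holomorphic_on ball 0 1" "norm z < 1"
  shows "summable (\<lambda>j. norm (cf j f * z ^ j))"
proof -
  define r where "r = (1 + norm z) / 2"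
  have r: "norm z < r" "r < 1" using assms(2) by (auto simp: r_def)
  have "summable (\<lambda>j. cf j f * (complex_of_real r) ^ j)"
    using cf_sums[OF assms(1), of "complex_of_real r"] r norm_ge_zero[of z]
    by (auto simp: sums_iff)
  then show ?thesis
    by (rule powser_insidea) (use r norm_ge_zero[of z] in auto)
qed

lemma coeff_integral:
  assumes hol: "f holomorphic_on ball 0 1" and z: "norm z < 1"
  shows "integral {0..2*pi} (\<lambda>t. f (z * exp (\<i> * complex_of_real t)) * exp (-(\<i> * complex_of_real t * of_nat k)))
       = 2*pi * (cf k f * z ^ k)"
proof -
  define u where "u = (\<lambda>j t. cf j f * z ^ j * exp (\<i> * complex_of_real t * of_int (int j - int k)))"
  have eq: "cf j f * (z * exp (\<i> * complex_of_real t)) ^ j * exp (-(\<i> * complex_of_real t * of_nat k)) = u j t" for j t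
  proof -
    have "(exp (\<i> * complex_of_real t)) ^ j = exp (of_nat j * (\<i> * complex_of_real t))"
      by (simp add: exp_of_nat_mult)
    then have "(z * exp (\<i> * complex_of_real t)) ^ j * exp (-(\<i> * complex_of_real t * of_nat k))
        = z ^ j * exp (of_nat j * (\<i> * complex_of_real t) + (-(\<i> * complex_of_real t * of_nat k)))"
      by (simp only: power_mult_distrib exp_add mult.assoc)
    also have "of_nat j * (\<i> * complex_of_real t) + (-(\<i> * complex_of_real t * of_nat k))
       = \<i> * complex_of_real t * of_int (int j - int k)"
      by (simp add: algebra_simps)
    finally show ?thesis by (simp add: u_def)
  qed
  have sums: "(\<lambda>j. u j t) sums (f (z * exp (\<i> * complex_of_real t)) * exp (-(\<i> * complex_of_real t * of_nat k)))" for t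
  proof -
    have "norm (z * exp (\<i> * complex_of_real t)) < 1" using z by (simp add: norm_mult)
    from sums_mult2[OF cf_sums[OF hol this], of "exp (-(\<i> * complex_of_real t * of_nat k))"]
    show ?thesis by (simp only: eq)
  qed
  have nu: "norm (u j t) = norm (cf j f * z ^ j)" for j t
    by (simp add: u_def norm_mult)
  have ul: "uniform_limit {0..2*pi} (\<lambda>n t. \<Sum>i<n. u i t) (\<lambda>t. suminf (\<lambda>i. u i t)) sequentially"
    by (rule Weierstrass_m_test[where M = "\<lambda>j. norm (cf j f * z ^ j)"])
       (use nu cf_abs_summable[OF hol z] in auto)
  have cont: "continuous_on {0..2*pi} (\<lambda>t. \<Sum>i<n. u i t)" for n
    unfolding u_def by (intro continuous_intros)
  obtain I J where I: "\<And>n. ((\<lambda>t. \<Sum>i<n. u i t) has_integral I n) {0..2*pi}"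
    and J: "((\<lambda>t. suminf (\<lambda>i. u i t)) has_integral J) {0..2*pi}"
    and IJ: "I \<longlonglongrightarrow> J"
    by (rule uniform_limit_integral[OF ul cont]) auto
  have intu: "integral {0..2*pi} (u i) = (if i = k then 2*pi * (cf k f * z ^ k) else 0)" for i
  proof -
    have "integral {0..2*pi} (u i) = cf i f * z ^ i * integral {0..2*pi} (\<lambda>t. exp (\<i> * complex_of_real t * of_int (int i - int k)))"
      unfolding u_def by (rule integral_mult_right)
    also have "\<dots> = (if i = k then 2*pi * (cf k f * z ^ k) else 0)"
      using orth_integral[of "int i - int k"] by (auto simp: scaleR_conv_of_real)
    finally show ?thesis .
  qed
  have "I n = (\<Sum>i<n. integral {0..2*pi} (u i))" for n
  proof -
    have "integral {0..2*pi} (\<lambda>t. \<Sum>i<n. u i t) = (\<Sum>i<n. integral {0..2*pi} (u i))"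
      by (rule integral_sum) (auto intro!: integrable_continuous_interval continuous_intros simp: u_def)
    then show ?thesis using I[of n] by (simp add: integral_unique)
  qed
  then have "I n = (if k < n then 2*pi * (cf k f * z ^ k) else 0)" for n
    by (simp add: intu)
  then have "eventually (\<lambda>n. I n = 2*pi * (cf k f * z ^ k)) sequentially"
    by (auto simp: eventually_at_top_linorder intro!: exI[of _ "Suc k"])
  then have "I \<longlonglongrightarrow> 2*pi * (cf k f * z ^ k)"
    by (rule tendsto_eventually)
  then have "J = 2*pi * (cf k f * z ^ k)" using IJ LIMSEQ_unique by blast
  moreover have "suminf (\<lambda>i. u i t) = f (z * exp (\<i> * complex_of_real t)) * exp (-(\<i> * complex_of_real t * of_nat k))" for t
    using sums[of t] by (simp add: sums_iff)
  ultimately show ?thesis using J by (simp add: integral_unique)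
qed

lemma hd_power0: "(deriv ^^ k) (\<lambda>w. w ^ n) (0::complex) = (if k = n then fact k else 0)"
proof -
  have "(deriv ^^ k) (\<lambda>w. (w - 0) ^ n) (0::complex) = pochhammer (of_nat (Suc n - k)) k * (0 - 0) ^ (n - k)"
    by (rule higher_deriv_power)
  then have e: "(deriv ^^ k) (\<lambda>w. w ^ n) (0::complex) = pochhammer (of_nat (Suc n - k)) k * 0 ^ (n - k)"
    by simp
  show ?thesis
  proof (cases "k = n")
    case True then show ?thesis using e by (simp add: pochhammer_fact)
  next
    case False
    show ?thesis
    proof (cases "k < n")
      case True then show ?thesis using e by simp
    next
      case False
      with \<open>k \<noteq> n\<close> have "Suc n - k = 0" "k \<noteq> 0" by auto
      then show ?thesis using e \<open>k \<noteq> n\<close> by (simp add: pochhammer_0_left)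
    qed
  qed
qed

lemma hd_sum0: "(deriv ^^ k) (\<lambda>w. \<Sum>i<n. c i * w ^ i) (0::complex) = (if k < n then c k * fact k else 0)"
proof (induction n)
  case 0 then show ?case by simp
next
  case (Suc n)
  have "(deriv ^^ k) (\<lambda>w. \<Sum>i<Suc n. c i * w ^ i) 0 = (deriv ^^ k) (\<lambda>w. (\<Sum>i<n. c i * w ^ i) + c n * w ^ n) 0"
    by simp
  also have "\<dots> = (deriv ^^ k) (\<lambda>w. \<Sum>i<n. c i * w ^ i) 0 + (deriv ^^ k) (\<lambda>w. c n * w ^ n) 0"
    by (rule higher_deriv_add[where S = UNIV]) (auto intro!: holomorphic_intros)
  also have "(deriv ^^ k) (\<lambda>w. c n * w ^ n) 0 = c n * (deriv ^^ k) (\<lambda>w. w ^ n) 0"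
    by (rule higher_deriv_cmult[where A = UNIV]) (auto intro!: holomorphic_intros)
  finally show ?case using Suc by (cases "k = n") (auto simp: hd_power0)
qed

lemma cf_poly: "cf k (poly q) = coeff q k"
proof -
  have "poly q = (\<lambda>w. \<Sum>i<Suc (degree q). coeff q i * w ^ i)"
    by (rule ext) (simp add: poly_altdef lessThan_Suc_atMost)
  then have "cf k (poly q) = (if k < Suc (degree q) then coeff q k * fact k else 0) / fact k"
    by (simp add: cf_def hd_sum0 del: sum.lessThan_Suc)
  then show ?thesis by (auto simp: coeff_eq_0)
qed

lemma cf_eq_on_ball:
  assumes "f holomorphic_on ball 0 1" "g holomorphic_on ball 0 1" "\<And>z. z \<in> ball 0 1 \<Longrightarrow> f z = g z"
  shows "cf k f = cf k g"
  unfolding cf_def using higher_deriv_transform_within_open[OF assms(1,2) _ _ assms(3)] by simp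

lemma restrD_poly_hol: "restrD (poly q) holomorphic_on ball 0 1"
proof -
  have "poly q holomorphic_on ball 0 1" by (auto intro!: holomorphic_intros)
  then show ?thesis
    by (rule holomorphic_transform) (simp add: restrD_def)
qed

lemma cf_restrD_poly: "cf k (restrD (poly q)) = coeff q k"
proof -
  have "poly q holomorphic_on ball 0 1" by (auto intro!: holomorphic_intros)
  then show ?thesis
    using cf_eq_on_ball[OF restrD_poly_hol[of q], where g = "poly q" and k = k] cf_poly[of k q]
    by (auto simp: restrD_def)
qed

lemma cf_diff:
  assumes "f holomorphic_on ball 0 1" "g holomorphic_on ball 0 1"
  shows "cf k (\<lambda>z. f z - g z) = cf k f - cf k g"
  unfolding cf_def using higher_deriv_diff[OF assms, of 0 k] by (simp add: diff_divide_distrib)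

context
  fixes X N
  assumes adm: "admissible_space X N"
begin

lemma adm_hol: "f \<in> X \<Longrightarrow> f holomorphic_on ball 0 1"
  by (rule adm[unfolded admissible_space_def, THEN conjunct1, rule_format, THEN conjunct1])
lemma adm_out: "f \<in> X \<Longrightarrow> z \<notin> ball 0 1 \<Longrightarrow> f z = 0"
  by (rule adm[unfolded admissible_space_def, THEN conjunct1, rule_format, THEN conjunct2, rule_format])
lemma adm_zero: "(\<lambda>z. 0) \<in> X"
  by (rule adm[unfolded admissible_space_def, THEN conjunct2, THEN conjunct1])
lemma adm_add: "f \<in> X \<Longrightarrow> g \<in> X \<Longrightarrow> (\<lambda>z. f z + g z) \<in> X"
  by (rule adm[unfolded admissible_space_def, THEN conjunct2, THEN conjunct2, THEN conjunct1, rule_format])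
lemma adm_smult: "f \<in> X \<Longrightarrow> (\<lambda>z. c * f z) \<in> X"
  by (rule adm[unfolded admissible_space_def, THEN conjunct2, THEN conjunct2, THEN conjunct2, THEN conjunct1, rule_format])
lemma adm_nonneg: "f \<in> X \<Longrightarrow> N f \<ge> 0"
  by (rule adm[unfolded admissible_space_def, THEN conjunct2, THEN conjunct2, THEN conjunct2, THEN conjunct2, THEN conjunct1, rule_format])
lemma adm_N0: "f \<in> X \<Longrightarrow> N f = 0 \<longleftrightarrow> f = (\<lambda>z. 0)"
  by (rule adm[unfolded admissible_space_def, THEN conjunct2, THEN conjunct2, THEN conjunct2, THEN conjunct2, THEN conjunct2, THEN conjunct1, rule_format])
lemma adm_Nsmult: "f \<in> X \<Longrightarrow> N (\<lambda>z. c * f z) = norm c * N f"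
  by (rule adm[unfolded admissible_space_def, THEN conjunct2, THEN conjunct2, THEN conjunct2, THEN conjunct2, THEN conjunct2, THEN conjunct2, THEN conjunct1, rule_format])
lemma adm_tri: "f \<in> X \<Longrightarrow> g \<in> X \<Longrightarrow> N (\<lambda>z. f z + g z) \<le> N f + N g"
  by (rule adm[unfolded admissible_space_def, THEN conjunct2, THEN conjunct2, THEN conjunct2, THEN conjunct2, THEN conjunct2, THEN conjunct2, THEN conjunct2, THEN conjunct1, rule_format])
lemma adm_complete: "(\<And>n. F n \<in> X) \<Longrightarrow> (\<forall>e>0. \<exists>M. \<forall>m\<ge>M. \<forall>n\<ge>M. N (\<lambda>z. F m z - F n z) < e) \<Longrightarrow>
          (\<exists>f\<in>X. (\<lambda>n. N (\<lambda>z. F n z - f z)) \<longlonglongrightarrow> 0)"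
  by (rule adm[unfolded admissible_space_def, THEN conjunct2, THEN conjunct2, THEN conjunct2, THEN conjunct2, THEN conjunct2, THEN conjunct2, THEN conjunct2, THEN conjunct2, THEN conjunct1, THEN spec, THEN mp, THEN mp]) simp_all
lemma adm_entire: "f holomorphic_on UNIV \<Longrightarrow> restrD f \<in> X"
  by (rule adm[unfolded admissible_space_def, THEN conjunct2, THEN conjunct2, THEN conjunct2, THEN conjunct2, THEN conjunct2, THEN conjunct2, THEN conjunct2, THEN conjunct2, THEN conjunct2, THEN conjunct2, THEN conjunct1, rule_format])
lemma adm_conv:
  fixes f :: "complex \<Rightarrow> complex" and g :: "real \<Rightarrow> complex"
  shows "f \<in> X \<Longrightarrow> g absolutely_integrable_on {0..2*pi} \<Longrightarrow>
        (let h = (\<lambda>z. (1 / (2*pi)) * integral {0..2*pi} (\<lambda>t. f (z * exp (\<i> * t)) * g t)) in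
          h \<in> X \<and> N h \<le> (1 / (2*pi)) * integral {0..2*pi} (\<lambda>t. norm (g t)) * N f)"
  by (rule adm[unfolded admissible_space_def, THEN conjunct2, THEN conjunct2, THEN conjunct2, THEN conjunct2, THEN conjunct2, THEN conjunct2, THEN conjunct2, THEN conjunct2, THEN conjunct2, THEN conjunct2, THEN conjunct2, rule_format])

lemma adm_diff: "f \<in> X \<Longrightarrow> g \<in> X \<Longrightarrow> (\<lambda>z. f z - g z) \<in> X"
  using adm_add[of f "\<lambda>z. (-1) * g z"] adm_smult[of g "-1"] by simp

lemma adm_Nsym: "f \<in> X \<Longrightarrow> g \<in> X \<Longrightarrow> N (\<lambda>z. f z - g z) = N (\<lambda>z. g z - f z)"
  using adm_Nsmult[of "\<lambda>z. g z - f z" "-1", OF adm_diff] by simp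

lemma adm_mono: "restrD (\<lambda>z. z ^ k) \<in> X"
  by (rule adm_entire) (auto intro!: holomorphic_intros)

lemma adm_poly: "restrD (poly q) \<in> X"
  by (rule adm_entire) (auto intro!: holomorphic_intros)

lemma N_mono_pos: "N (restrD (\<lambda>z. z ^ k)) > 0"
proof -
  have "restrD (\<lambda>z. z ^ k) \<noteq> (\<lambda>z. 0)"
  proof
    assume "restrD (\<lambda>z. z ^ k) = (\<lambda>z. 0)"
    then have "restrD (\<lambda>z. z ^ k) (1/2) = 0" by simp
    then show False by (simp add: restrD_def)
  qed
  then show ?thesis using adm_N0[OF adm_mono] adm_nonneg[OF adm_mono] by (auto simp: less_le)
qed

lemma cf_bound:
  assumes f: "f \<in> X"
  shows "norm (cf k f) * N (restrD (\<lambda>z. z ^ k)) \<le> N f"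
proof -
  define g where "g = (\<lambda>t::real. exp (-(\<i> * complex_of_real t * of_nat k)))"
  have gi: "g absolutely_integrable_on {0..2*pi}"
    unfolding g_def by (intro absolutely_integrable_continuous_real continuous_intros)
  define h where "h = (\<lambda>z. (1 / (2*pi)) * integral {0..2*pi} (\<lambda>t. f (z * exp (\<i> * t)) * g t))"
  from adm_conv[OF f gi] have hX: "N h \<le> (1 / (2*pi)) * integral {0..2*pi} (\<lambda>t. norm (g t)) * N f"
    by (simp add: h_def Let_def)
  have ng: "(\<lambda>t. norm (g t)) = (\<lambda>t. 1)" by (auto simp: g_def)
  have hfun: "h = (\<lambda>z. cf k f * restrD (\<lambda>z. z ^ k) z)"
  proof
    fix z
    show "h z = cf k f * restrD (\<lambda>z. z ^ k) z"
    proof (cases "z \<in> ball 0 1")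
      case True
      then have "norm z < 1" by simp
      from coeff_integral[OF adm_hol[OF f] this, of k] True show ?thesis
        by (simp add: h_def g_def restrD_def)
    next
      case False
      then have "f (z * exp (\<i> * complex_of_real t)) = 0" for t
        by (intro adm_out[OF f]) (simp add: norm_mult)
      with False show ?thesis by (simp add: h_def restrD_def)
    qed
  qed
  have "N h = norm (cf k f) * N (restrD (\<lambda>z. z ^ k))"
    unfolding hfun by (rule adm_Nsmult[OF adm_mono])
  with hX ng show ?thesis by simp
qed

lemma cf_diff_bound:
  assumes "f \<in> X" "g \<in> X"
  shows "norm (cf k f - cf k g) * N (restrD (\<lambda>z. z ^ k)) \<le> N (\<lambda>z. f z - g z)"
  using cf_bound[OF adm_diff[OF assms], of k] cf_diff[OF adm_hol adm_hol, OF assms] by simp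


lemma adm_sum:
  assumes "finite A" "\<And>k. k \<in> A \<Longrightarrow> F k \<in> X"
  shows "(\<lambda>z. \<Sum>k\<in>A. F k z) \<in> X \<and> N (\<lambda>z. \<Sum>k\<in>A. F k z) \<le> (\<Sum>k\<in>A. N (F k))"
  using assms
proof (induction A rule: finite_induct)
  case empty
  then show ?case using adm_zero adm_N0[OF adm_zero] by simp
next
  case (insert a A)
  have FA: "\<And>k. k \<in> A \<Longrightarrow> F k \<in> X" using insert.prems by blast
  have IH: "(\<lambda>z. \<Sum>k\<in>A. F k z) \<in> X" "N (\<lambda>z. \<Sum>k\<in>A. F k z) \<le> (\<Sum>k\<in>A. N (F k))" "F a \<in> X"
    using insert.IH[OF FA] insert.prems by blast+
  have "(\<lambda>z. F a z + (\<Sum>k\<in>A. F k z)) \<in> X" using adm_add[OF IH(3) IH(1)] .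
  moreover have "N (\<lambda>z. F a z + (\<Sum>k\<in>A. F k z)) \<le> N (F a) + (\<Sum>k\<in>A. N (F k))"
    using adm_tri[OF IH(3) IH(1)] IH(2) by linarith
  moreover have "(\<lambda>z. \<Sum>k\<in>insert a A. F k z) = (\<lambda>z. F a z + (\<Sum>k\<in>A. F k z))"
    by (rule ext) (rule sum.insert[OF insert.hyps])
  moreover have "(\<Sum>k\<in>insert a A. N (F k)) = N (F a) + (\<Sum>k\<in>A. N (F k))"
    by (rule sum.insert[OF insert.hyps])
  ultimately show ?case by metis
qed

lemma cf_lim:
  assumes f: "f \<in> X" and G: "\<And>n. G n \<in> X" and lim: "(\<lambda>n. N (\<lambda>z. f z - G n z)) \<longlonglongrightarrow> 0"
  shows "(\<lambda>n. cf k (G n)) \<longlonglongrightarrow> cf k f"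
proof -
  have pos: "N (restrD (\<lambda>z. z ^ k)) > 0" by (rule N_mono_pos)
  have "(\<lambda>n. cf k (G n) - cf k f) \<longlonglongrightarrow> 0"
  proof (rule Lim_null_comparison)
    show "\<forall>\<^sub>F n in sequentially. norm (cf k (G n) - cf k f) \<le> N (\<lambda>z. f z - G n z) / N (restrD (\<lambda>z. z ^ k))"
    proof (rule always_eventually, rule allI)
      fix n
      have h: "norm (cf k f - cf k (G n)) * N (restrD (\<lambda>z. z ^ k)) \<le> N (\<lambda>z. f z - G n z)"
        by (rule cf_diff_bound[OF f G])
      show "norm (cf k (G n) - cf k f) \<le> N (\<lambda>z. f z - G n z) / N (restrD (\<lambda>z. z ^ k))"
        unfolding pos_le_divide_eq[OF pos] norm_minus_commute[of "cf k (G n)"] by (rule h)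
    qed
    show "(\<lambda>n. N (\<lambda>z. f z - G n z) / N (restrD (\<lambda>z. z ^ k))) \<longlonglongrightarrow> 0"
      by (rule tendsto_divide_zero[OF lim])
  qed
  then show ?thesis by (rule LIM_zero_cancel)
qed

end

lemma liminf_zero_iff:
  fixes a :: "nat \<Rightarrow> real"
  assumes "\<And>n. a n \<ge> 0"
  shows "liminf (\<lambda>n. ereal (a n)) = 0 \<longleftrightarrow> (\<forall>e>0. \<forall>M. \<exists>n\<ge>M. a n < e)"
proof
  assume L: "liminf (\<lambda>n. ereal (a n)) = 0"
  show "\<forall>e>0. \<forall>M. \<exists>n\<ge>M. a n < e"
  proof (rule ccontr)
    assume "\<not> ?thesis"
    then obtain e M where e: "e > 0" and M: "\<And>n. n \<ge> M \<Longrightarrow> a n \<ge> e" by (auto simp: not_less)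
    have "ereal e \<le> liminf (\<lambda>n. ereal (a n))"
      by (rule Liminf_bounded) (use M in \<open>auto simp: eventually_sequentially\<close>)
    with L e show False by simp
  qed
next
  assume H: "\<forall>e>0. \<forall>M. \<exists>n\<ge>M. a n < e"
  have "0 \<le> liminf (\<lambda>n. ereal (a n))"
    by (rule Liminf_bounded) (use assms in auto)
  moreover have "liminf (\<lambda>n. ereal (a n)) \<le> 0"
    unfolding liminf_SUP_INF
  proof (rule SUP_least)
    fix M
    show "(INF m\<in>{M..}. ereal (a m)) \<le> 0"
    proof (rule ereal_le_epsilon2)
      fix e :: real assume "e > 0"
      then obtain n where "n \<ge> M" "a n < e" using H by blast
      then have "(INF m\<in>{M..}. ereal (a m)) \<le> ereal (a n)" by (intro INF_lower) auto
      also have "\<dots> \<le> 0 + ereal e" using \<open>a n < e\<close> by simp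
      finally show "(INF m\<in>{M..}. ereal (a m)) \<le> 0 + ereal e" .
    qed
  qed
  ultimately show "liminf (\<lambda>n. ereal (a n)) = 0" by simp
qed

primrec mseq :: "(nat \<Rightarrow> real) \<Rightarrow> nat \<Rightarrow> nat" where
  "mseq a 0 = (SOME n. a n < 1)"
| "mseq a (Suc k) = (SOME n. n > mseq a k \<and> a n < (1/2) ^ Suc k)"

lemma mseq_props:
  assumes H: "\<forall>e>0. \<forall>M. \<exists>n\<ge>M. a n < e"
  shows "a (mseq a k) < (1/2) ^ k" "mseq a (Suc k) > mseq a k"
proof -
  have P: "\<exists>n. n > M \<and> a n < e" if "e > 0" for M e
    using H that by (metis Suc_le_eq)
  have A: "a (mseq a k) < (1/2) ^ k \<and> (mseq a (Suc k) > mseq a k \<and> a (mseq a (Suc k)) < (1/2) ^ Suc k)" for k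
  proof -
    have s: "mseq a (Suc k) > mseq a k \<and> a (mseq a (Suc k)) < (1/2) ^ Suc k"
      using someI_ex[OF P[of "(1/2) ^ Suc k" "mseq a k"]] by simp
    have "a (mseq a k) < (1/2) ^ k"
    proof (cases k)
      case 0
      then show ?thesis using someI_ex[of "\<lambda>n. a n < 1"] P[of 1 0] by auto
    next
      case (Suc j)
      then show ?thesis using someI_ex[OF P[of "(1/2) ^ Suc j" "mseq a j"]] by simp
    qed
    with s show ?thesis by blast
  qed
  show "a (mseq a k) < (1/2) ^ k" "mseq a (Suc k) > mseq a k" using A by auto
qed

lemma cinteger_sum: "(\<And>k. k \<in> A \<Longrightarrow> cinteger (c k)) \<Longrightarrow> cinteger (\<Sum>k\<in>A. c k)"
  unfolding cinteger_def by (auto simp: Re_sum Im_sum intro!: Ints_sum)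

lemma cinteger_norm_ge1: "cinteger c \<Longrightarrow> c \<noteq> 0 \<Longrightarrow> norm c \<ge> 1"
proof -
  assume c: "cinteger c" "c \<noteq> 0"
  then have "Re c \<noteq> 0 \<or> Im c \<noteq> 0" using complex_eqI by auto
  then show ?thesis
  proof
    assume "Re c \<noteq> 0"
    then have "1 \<le> \<bar>Re c\<bar>" using c by (intro Ints_nonzero_abs_ge1) (auto simp: cinteger_def)
    then show ?thesis using abs_Re_le_cmod[of c] by linarith
  next
    assume "Im c \<noteq> 0"
    then have "1 \<le> \<bar>Im c\<bar>" using c by (intro Ints_nonzero_abs_ge1) (auto simp: cinteger_def)
    then show ?thesis using abs_Im_le_cmod[of c] by linarith
  qed
qed



theorem theorem5p5:
  fixes X :: "(complex \<Rightarrow> complex) set" and N :: "(complex \<Rightarrow> complex) \<Rightarrow> real"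
  assumes "admissible_space X N"
  shows "(\<exists>f\<in>X. (\<nexists>q. f = restrD (poly q)) \<and>
            (\<exists>p. (\<forall>n. p n \<in> Pn_Z n) \<and> (\<lambda>n. N (\<lambda>z. f z - restrD (poly (p n)) z)) \<longlonglongrightarrow> 0))
         \<longleftrightarrow> liminf (\<lambda>n. ereal (N (restrD (\<lambda>z. z ^ n)))) = 0"
proof -
  note adm = assms
  define a where "a = (\<lambda>n. N (restrD (\<lambda>z. z ^ n)))"
  have a_pos: "a n > 0" for n unfolding a_def by (rule N_mono_pos[OF adm])
  have LI: "liminf (\<lambda>n. ereal (N (restrD (\<lambda>z. z ^ n)))) = 0 \<longleftrightarrow> (\<forall>e>0. \<forall>M. \<exists>n\<ge>M. a n < e)"
    using liminf_zero_iff[of a] a_pos by (simp add: a_def less_imp_le)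
  show ?thesis
    unfolding LI
  proof
    assume "\<exists>f\<in>X. (\<nexists>q. f = restrD (poly q)) \<and>
            (\<exists>p. (\<forall>n. p n \<in> Pn_Z n) \<and> (\<lambda>n. N (\<lambda>z. f z - restrD (poly (p n)) z)) \<longlonglongrightarrow> 0)"
    then obtain f p where fX: "f \<in> X" and npoly: "\<nexists>q. f = restrD (poly q)"
      and pZ: "\<And>n. p n \<in> Pn_Z n" and lim: "(\<lambda>n. N (\<lambda>z. f z - restrD (poly (p n)) z)) \<longlonglongrightarrow> 0"
      by blast
    have cflim: "(\<lambda>n. coeff (p n) k) \<longlonglongrightarrow> cf k f" for k
      using cf_lim[OF adm fX adm_poly[OF adm] lim, of k] by (simp add: cf_restrD_poly)
    have cfint: "cinteger (cf k f)" for k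
    proof -
      have ci: "cinteger (coeff (p n) k)" for n using pZ[of n] by (simp add: Pn_Z_def)
      have "Re (cf k f) \<in> \<int>"
        by (rule Lim_in_closed_set[OF closed_Ints _ _ tendsto_Re[OF cflim[of k]]])
           (use ci in \<open>auto simp: cinteger_def\<close>)
      moreover have "Im (cf k f) \<in> \<int>"
        by (rule Lim_in_closed_set[OF closed_Ints _ _ tendsto_Im[OF cflim[of k]]])
           (use ci in \<open>auto simp: cinteger_def\<close>)
      ultimately show ?thesis by (simp add: cinteger_def)
    qed
    have inf: "\<exists>k\<ge>n. cf k f \<noteq> 0" for n
    proof (rule ccontr)
      assume "\<not> ?thesis"
      then have z: "\<And>k. k \<ge> n \<Longrightarrow> cf k f = 0" by auto
      define q where "q = (\<Sum>k<n. monom (cf k f) k)"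
      have "f = restrD (poly q)"
      proof
        fix z
        show "f z = restrD (poly q) z"
        proof (cases "z \<in> ball 0 1")
          case True
          then have "norm z < 1" by simp
          from cf_sums[OF adm_hol[OF adm fX] this]
          have s1: "(\<lambda>j. cf j f * z ^ j) sums f z" .
          have s2: "(\<lambda>j. cf j f * z ^ j) sums (\<Sum>j\<in>{..<n}. cf j f * z ^ j)"
            by (rule sums_finite) (auto simp: z)
          have "f z = (\<Sum>j<n. cf j f * z ^ j)" using sums_unique2[OF s1 s2] .
          also have "\<dots> = poly q z" by (simp add: q_def poly_sum poly_monom)
          finally show ?thesis using True by (simp add: restrD_def)
        next
          case False
          then show ?thesis using adm_out[OF adm fX False] by (simp add: restrD_def)
        qed
      qed
      with npoly show False by blast
    qed
    show "\<forall>e>0. \<forall>M. \<exists>n\<ge>M. a n < e"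
    proof (intro allI impI)
      fix e :: real and M :: nat
      assume e: "e > 0"
      obtain n0 where n0': "\<And>n. n \<ge> n0 \<Longrightarrow> norm (N (\<lambda>z. f z - restrD (poly (p n)) z) - 0) < e"
        using LIMSEQ_D[OF lim e] by blast
      have n0: "N (\<lambda>z. f z - restrD (poly (p n)) z) < e" if "n \<ge> n0" for n
        using n0'[OF that] by (simp add: abs_less_iff)
      define n where "n = max n0 M"
      obtain k where k: "k \<ge> n" "cf k f \<noteq> 0" using inf by blast
      have ck: "coeff (p n) k = 0"
      proof -
        have "p n = 0 \<or> degree (p n) < n" using pZ[of n] by (simp add: Pn_Z_def)
        then show ?thesis using k(1) by (auto intro: coeff_eq_0)
      qed
      have "a k \<le> norm (cf k f) * a k"
        using cinteger_norm_ge1[OF cfint k(2)] a_pos[of k] by simp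
      also have "\<dots> = norm (cf k f - cf k (restrD (poly (p n)))) * a k"
        by (simp add: cf_restrD_poly ck)
      also have "\<dots> \<le> N (\<lambda>z. f z - restrD (poly (p n)) z)"
        unfolding a_def by (rule cf_diff_bound[OF adm fX adm_poly[OF adm]])
      also have "\<dots> < e" by (rule n0) (simp add: n_def)
      finally show "\<exists>n\<ge>M. a n < e" using k(1) by (intro exI[of _ k]) (simp add: n_def)
    qed
  next
    assume H: "\<forall>e>0. \<forall>M. \<exists>n\<ge>M. a n < e"
    define m where "m = mseq a"
    have am: "a (m k) < (1/2) ^ k" for k unfolding m_def by (rule mseq_props(1)[OF H])
    have sm: "strict_mono m" unfolding m_def strict_mono_Suc_iff using mseq_props(2)[OF H] by blast
    have mge: "k \<le> m k" for k by (rule seq_suble[OF sm])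
    define P where "P = (\<lambda>K. \<Sum>k<K. monom (1::complex) (m k))"
    define S where "S = (\<lambda>K. restrD (poly (P K)))"
    have SX: "S K \<in> X" for K unfolding S_def by (rule adm_poly[OF adm])
    have Ssum: "S K z = (\<Sum>k<K. restrD (\<lambda>z. z ^ m k) z)" for K z
      by (simp add: S_def P_def restrD_def poly_sum poly_monom)
    have Sdiff: "N (\<lambda>z. S j z - S i z) \<le> 2 * (1/2) ^ i" if "i \<le> j" for i j
    proof -
      have eqf: "(\<lambda>z. S j z - S i z) = (\<lambda>z. \<Sum>k\<in>{i..<j}. restrD (\<lambda>z. z ^ m k) z)"
      proof
        fix z
        have "(\<Sum>k<j. restrD (\<lambda>z. z ^ m k) z) = (\<Sum>k\<in>{0..<i}. restrD (\<lambda>z. z ^ m k) z) + (\<Sum>k\<in>{i..<j}. restrD (\<lambda>z. z ^ m k) z)"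
          using sum.atLeastLessThan_concat[of 0 i j "\<lambda>k. restrD (\<lambda>z. z ^ m k) z"] that
          by (simp add: atLeast0LessThan)
        then show "S j z - S i z = (\<Sum>k\<in>{i..<j}. restrD (\<lambda>z. z ^ m k) z)"
          by (simp add: Ssum atLeast0LessThan)
      qed
      have "N (\<lambda>z. S j z - S i z) = N (\<lambda>z. \<Sum>k\<in>{i..<j}. restrD (\<lambda>z. z ^ m k) z)"
        by (simp only: eqf)
      also have "\<dots> \<le> (\<Sum>k\<in>{i..<j}. N (restrD (\<lambda>z. z ^ m k)))"
        using adm_sum[OF adm, of "{i..<j}" "\<lambda>k. restrD (\<lambda>z. z ^ m k)"] adm_mono[OF adm] by auto
      also have "\<dots> \<le> (\<Sum>k\<in>{i..<j}. (1/2) ^ k)"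
        by (intro sum_mono less_imp_le) (use am in \<open>simp add: a_def\<close>)
      also have "\<dots> \<le> 2 * (1/2) ^ i"
      proof -
        have "(\<Sum>k\<in>{i..<j}. (1/2::real) ^ k) = (\<Sum>k<j - i. (1/2) ^ (i + k))"
          by (rule sum.reindex_bij_witness[of _ "\<lambda>k. i + k" "\<lambda>k. k - i"]) (use that in auto)
        also have "\<dots> = (1/2) ^ i * (\<Sum>k<j - i. (1/2) ^ k)"
          by (simp add: power_add sum_distrib_left)
        also have "(\<Sum>k<j - i. (1/2::real) ^ k) \<le> 2"
        proof -
          have "(\<Sum>k<j - i. (1/2::real) ^ k) = ((1/2) ^ (j - i) - 1) / (1/2 - 1)"
            by (rule geometric_sum) simp
          moreover have "((1/2::real) ^ (j - i) - 1) / (1/2 - 1) = 2 - 2 * (1/2) ^ (j - i)"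
            by (simp add: field_simps)
          moreover have "(0::real) \<le> (1/2) ^ (j - i)" by simp
          ultimately show ?thesis by linarith
        qed
        then have "(1/2) ^ i * (\<Sum>k<j - i. (1/2::real) ^ k) \<le> (1/2) ^ i * 2"
          by (intro mult_left_mono) auto
        finally show ?thesis by simp
      qed
      finally show ?thesis .
    qed
    have cauchy: "\<forall>e>0. \<exists>M. \<forall>i\<ge>M. \<forall>j\<ge>M. N (\<lambda>z. S i z - S j z) < e"
    proof (intro allI impI)
      fix e :: real assume e: "e > 0"
      obtain M where M: "(1/2::real) ^ M < e / 2" using real_arch_pow_inv[of "e/2" "1/2"] e by auto
      have "N (\<lambda>z. S i z - S j z) < e" if "i \<ge> M" "j \<ge> M" for i j
      proof -
        have mono2: "2 * (1/2::real) ^ x \<le> 2 * (1/2) ^ M" if "x \<ge> M" for x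
          using that by (simp add: power_decreasing)
        show ?thesis
        proof (cases "j \<le> i")
          case True
          then show ?thesis using Sdiff[OF True] mono2[OF that(2)] M by linarith
        next
          case False
          then have "N (\<lambda>z. S j z - S i z) \<le> 2 * (1/2) ^ i" using Sdiff by simp
          then show ?thesis using adm_Nsym[OF adm SX SX, of i j] mono2[OF that(1)] M by linarith
        qed
      qed
      then show "\<exists>M. \<forall>i\<ge>M. \<forall>j\<ge>M. N (\<lambda>z. S i z - S j z) < e" by blast
    qed
    obtain f where fX: "f \<in> X" and flim: "(\<lambda>n. N (\<lambda>z. S n z - f z)) \<longlonglongrightarrow> 0"
      using adm_complete[OF adm SX cauchy] by blast
    have flim': "(\<lambda>n. N (\<lambda>z. f z - S n z)) \<longlonglongrightarrow> 0"
      using flim adm_Nsym[OF adm SX fX] by simp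
    define K where "K = (\<lambda>n. LEAST k. n \<le> m k)"
    have K1: "n \<le> m (K n)" for n unfolding K_def by (rule LeastI[of _ n]) (rule mge)
    have K2: "m k < n" if "k < K n" for k n
      using not_less_Least[OF that[unfolded K_def]] by simp
    have Klim: "filterlim K at_top sequentially"
      unfolding filterlim_at_top eventually_sequentially
    proof (intro allI exI[of _ "Suc (m _)"] impI allI)
      fix B n assume "Suc (m B) \<le> n"
      show "B \<le> K n"
      proof (rule ccontr)
        assume "\<not> B \<le> K n"
        then have "m (K n) < m B" using sm by (simp add: strict_mono_less)
        with K1[of n] \<open>Suc (m B) \<le> n\<close> show False by simp
      qed
    qed
    define p where "p = (\<lambda>n. P (K n))"
    have pZ: "p n \<in> Pn_Z n" for n
    proof -
      have c: "cinteger (coeff (p n) i)" for i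
        by (simp add: p_def P_def coeff_sum coeff_monom)
           (rule cinteger_sum, simp add: cinteger_def)
      have "p n = 0 \<or> degree (p n) < n"
      proof (cases "n = 0")
        case True
        then have "K n = 0" using K2[of 0 n] by (cases "K n") auto
        then show ?thesis by (simp add: p_def P_def)
      next
        case False
        have "degree (p n) \<le> n - 1"
          unfolding p_def P_def
        proof (rule degree_sum_le)
          fix k assume "k \<in> {..<K n}"
          then have "m k < n" using K2 by simp
          then show "degree (monom (1::complex) (m k)) \<le> n - 1" by (simp add: degree_monom_eq)
        qed simp
        then have "degree (p n) < n" using False by linarith
        then show ?thesis by blast
      qed
      with c show ?thesis by (simp add: Pn_Z_def)
    qed
    have plim: "(\<lambda>n. N (\<lambda>z. f z - restrD (poly (p n)) z)) \<longlonglongrightarrow> 0"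
      using filterlim_compose[OF flim' Klim] by (simp add: p_def S_def)
    have cf1: "cf (m j) f = 1" for j
    proof -
      have c: "cf (m j) (S K) = (if j < K then 1 else 0)" for K
      proof -
        have "cf (m j) (S K) = (\<Sum>k<K. if m k = m j then 1 else 0)"
          by (simp add: S_def cf_restrD_poly P_def coeff_sum coeff_monom)
        also have "\<dots> = (\<Sum>k<K. if k = j then 1 else 0)"
          using strict_mono_eq[OF sm] by simp
        finally show ?thesis by simp
      qed
      have "(\<lambda>K. cf (m j) (S K)) \<longlonglongrightarrow> cf (m j) f" by (rule cf_lim[OF adm fX SX flim'])
      moreover have "(\<lambda>K. cf (m j) (S K)) \<longlonglongrightarrow> 1"
        by (rule tendsto_eventually) (auto simp: c eventually_at_top_linorder intro!: exI[of _ "Suc j"])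
      ultimately show ?thesis using LIMSEQ_unique by blast
    qed
    have npoly: "\<nexists>q. f = restrD (poly q)"
    proof
      assume "\<exists>q. f = restrD (poly q)"
      then obtain q where q: "f = restrD (poly q)" by blast
      have "cf (m (Suc (degree q))) f = coeff q (m (Suc (degree q)))" by (simp add: q cf_restrD_poly)
      also have "\<dots> = 0" using mge[of "Suc (degree q)"] by (intro coeff_eq_0) simp
      finally show False using cf1 by simp
    qed
    show "\<exists>f\<in>X. (\<nexists>q. f = restrD (poly q)) \<and>
            (\<exists>p. (\<forall>n. p n \<in> Pn_Z n) \<and> (\<lambda>n. N (\<lambda>z. f z - restrD (poly (p n)) z)) \<longlonglongrightarrow> 0)"
      using fX npoly pZ plim by blast
  qed
qed

end
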